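(* Let $n\ge 4$ and let $\rho=(a^b)$ be a partition of $n$ with $a,b\ge 2$ and $ab=n$ (i.e. $b$ parts all equal to $a$). Then $\rho$ has exactly two neighbors in the partition graph $G_n$, namely \[ \alpha(\rho)=(a+1,a^{\,b-2},a-1)\quad\text{and}\quad \beta(\rho)=(a^{\,b-1},a-1,1), \] where $\alpha(\rho)=(a+1,a-1)$ when $b=2$.
   Context: The partition graph $G_n$ has as vertices the integer partitions of $n$; two partitions are adjacent if one is obtained from the other by a single elementary unit transfer followed by reordering: decrease one part by $1$ and either increase a different part by $1$ or create a new part equal to $1$, then delete a part that became $0$ and sort the parts in nonincreasing order (the result being a partition different from the original). Exponent notation $a^k$ denotes $k$ parts equal to $a$. *)

theory Defs
  imports Main
begin

definition is_partition :: "nat \<Rightarrow> nat list \<Rightarrow> bool" where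
  "is_partition n p \<longleftrightarrow> sorted_wrt (\<ge>) p \<and> (\<forall>x\<in>set p. 0 < x) \<and> sum_list p = n"

definition normalize :: "nat list \<Rightarrow> nat list" where
  "normalize xs = rev (sort (filter (\<lambda>x. x \<noteq> 0) xs))"

definition unit_transfer :: "nat list \<Rightarrow> nat list \<Rightarrow> bool" where
  "unit_transfer p q \<longleftrightarrow> q \<noteq> p \<and>
     (\<exists>i < length p.
        (\<exists>j < length p. j \<noteq> i \<and> q = normalize (p[i := p ! i - 1, j := p ! j + 1]))
      \<or> q = normalize (p[i := p ! i - 1] @ [1]))"

definition adjacent :: "nat \<Rightarrow> nat list \<Rightarrow> nat list \<Rightarrow> bool" where
  "adjacent n p q \<longleftrightarrow> is_partition n p \<and> is_partition n q \<and>
     (unit_transfer p q \<or> unit_transfer q p)"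

end

theory Submission
  imports Defs "HOL-Library.Multiset"
begin

lemma sorted_desc_eq:
  assumes "sorted_wrt (\<ge>) xs" "sorted_wrt (\<ge>) (ys::nat list)" "mset xs = mset ys"
  shows "xs = ys"
proof -
  have s1: "sorted (rev xs)" "sorted (rev ys)" using assms by (simp_all add: sorted_wrt_rev)
  have "sort (rev xs) = rev ys" by (rule properties_for_sort) (use assms s1 in simp_all)
  moreover have "sort (rev xs) = rev xs" using s1 by (simp add: sorted_sort_id)
  ultimately show ?thesis by simp
qed

lemma normalize_from_mset:
  assumes "sorted_wrt (\<ge>) ys" "mset xs = mset ys" "0 \<notin> set ys"
  shows "normalize xs = ys"
proof -
  have "set xs = set ys" using assms(2) by (rule mset_eq_setD)
  then have "\<forall>x\<in>set xs. x \<noteq> 0" using assms(3) by metis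
  then have f: "filter (\<lambda>x. x \<noteq> 0) xs = xs" by (rule filter_True)
  have s1: "sorted (rev ys)" using assms by (simp add: sorted_wrt_rev)
  have "sort xs = rev ys" by (rule properties_for_sort) (use assms s1 in simp_all)
  then show ?thesis unfolding normalize_def f by simp
qed

lemma mset_normalize: "mset (normalize xs) = mset (filter (\<lambda>x. x \<noteq> 0) xs)"
  by (simp add: normalize_def)

lemma mset_rep2:
  assumes "i < b" "j < b" "i \<noteq> j"
  shows "mset ((replicate b a)[i := u, j := v]) = replicate_mset (b-2) a + {#u, v#}"
proof -
  have "b \<ge> 2" using assms by linarith
  then obtain c where c: "b = Suc (Suc c)" by (metis add_2_eq_Suc le_Suc_ex)
  have "mset ((replicate b a)[i := u, j := v]) = add_mset v (add_mset u (replicate_mset b a - {#a#}) - {#a#})"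
    using assms by (simp add: mset_update nth_list_update)
  also have "\<dots> = replicate_mset (b-2) a + {#u, v#}" by (simp add: c)
  finally show ?thesis .
qed

lemma sorted_rep: "sorted_wrt (\<ge>) (replicate b (a::nat))"
  by (induction b) auto

theorem lemma3p1:
  fixes n a b :: nat
  assumes "n \<ge> 4" and "a \<ge> 2" and "b \<ge> 2" and "a * b = n"
  shows "{q. adjacent n (replicate b a) q} =
           {(a + 1) # replicate (b - 2) a @ [a - 1], replicate (b - 1) a @ [a - 1, 1]}
         \<and> (a + 1) # replicate (b - 2) a @ [a - 1] \<noteq> replicate (b - 1) a @ [a - 1, 1]"
proof -
  let ?p = "replicate b a"
  let ?al = "(a + 1) # replicate (b - 2) a @ [a - 1]"
  let ?be = "replicate (b - 1) a @ [a - 1, 1]"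
  obtain c where c: "b = Suc (Suc c)" using assms(3)
    by (metis add_2_eq_Suc le_Suc_ex)
  have sortA: "sorted_wrt (\<ge>) ?al" using c by (auto simp: sorted_wrt_append sorted_rep)
  have sortB: "sorted_wrt (\<ge>) ?be" using c assms(2) by (auto simp: sorted_wrt_append sorted_rep)
  have msetA: "mset ?al = replicate_mset (b-2) a + {#a-1, a+1#}" by (simp add: c)
  have msetB: "mset ?be = replicate_mset (b-1) a + {#1, a-1#}" by (simp add: c)
  have z: "0 \<notin> set ?al" "0 \<notin> set ?be" using assms(2) by auto
  have partP: "is_partition n ?p" using assms by (simp add: is_partition_def sorted_rep sum_list_replicate mult.commute)
  obtain d where d: "a = Suc (Suc d)" using assms(2) by (metis add_2_eq_Suc le_Suc_ex)
  have sumA: "sum_list ?al = n"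
    using c d assms(4) by (simp add: sum_list_replicate algebra_simps)
  have sumB: "sum_list ?be = n"
    using c d assms(4) by (simp add: sum_list_replicate algebra_simps)
  have pos: "\<forall>x\<in>set xs. 0 < x" if "0 \<notin> set xs" for xs :: "nat list"
    using that by (metis gr0I)
  have partA: "is_partition n ?al" unfolding is_partition_def using sortA sumA pos[OF z(1)] by blast
  have partB: "is_partition n ?be" unfolding is_partition_def using sortB sumB pos[OF z(2)] by blast
  have neq: "?al \<noteq> ?be" using c by simp
  have utA: "unit_transfer ?p ?al"
    unfolding unit_transfer_def
  proof (intro conjI exI[of _ 0] )
    show "?al \<noteq> ?p" using c by simp
    show "0 < length ?p" using c by simp
    have "normalize (?p[0 := ?p ! 0 - 1, 1 := ?p ! 1 + 1]) = ?al"
      by (rule normalize_from_mset[OF sortA _ z(1)]) (simp add: mset_rep2 c msetA)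
    then show "(\<exists>j<length ?p. j \<noteq> 0 \<and> ?al = normalize (?p[0 := ?p ! 0 - 1, j := ?p ! j + 1]))
       \<or> ?al = normalize (?p[0 := ?p ! 0 - 1] @ [1])"
      using c by (intro disjI1 exI[of _ 1]) auto
  qed
  have utB: "unit_transfer ?p ?be"
    unfolding unit_transfer_def
  proof (intro conjI exI[of _ 0] )
    show "?be \<noteq> ?p"
    proof
      assume "?be = ?p"
      then have "length ?be = length ?p" by simp
      then show False using c by simp
    qed
    show "0 < length ?p" using c by simp
    have "normalize (?p[0 := ?p ! 0 - 1] @ [1]) = ?be"
      by (rule normalize_from_mset[OF sortB _ z(2)]) (simp add: c mset_update)
    then show "(\<exists>j<length ?p. j \<noteq> 0 \<and> ?be = normalize (?p[0 := ?p ! 0 - 1, j := ?p ! j + 1]))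
       \<or> ?be = normalize (?p[0 := ?p ! 0 - 1] @ [1])"
      by simp
  qed
  have sub: "q = ?al \<or> q = ?be" if adj: "adjacent n ?p q" for q
  proof -
    have pq: "is_partition n q" using adj by (simp add: adjacent_def)
    have "unit_transfer ?p q \<or> unit_transfer q ?p" using adj by (simp add: adjacent_def)
    then show ?thesis
    proof
      assume "unit_transfer ?p q"
      then obtain i where i0: "i < length ?p" and
        h0: "(\<exists>j < length ?p. j \<noteq> i \<and> q = normalize (?p[i := ?p ! i - 1, j := ?p ! j + 1]))
            \<or> q = normalize (?p[i := ?p ! i - 1] @ [1])"
        unfolding unit_transfer_def by blast
      have i: "i < b" using i0 by simp
      have h: "(\<exists>j < b. j \<noteq> i \<and> q = normalize (?p[i := a - 1, j := a + 1]))
            \<or> q = normalize (?p[i := a - 1] @ [1])" using h0 i by (simp cong: conj_cong)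
      from h show ?thesis
      proof
        assume "\<exists>j < b. j \<noteq> i \<and> q = normalize (?p[i := a - 1, j := a + 1])"
        then obtain j where j: "j < b" "j \<noteq> i" "q = normalize (?p[i := a - 1, j := a + 1])" by blast
        have "normalize (?p[i := a - 1, j := a + 1]) = ?al"
          by (rule normalize_from_mset[OF sortA _ z(1)]) (use i j in \<open>simp add: mset_rep2 msetA\<close>)
        then show ?thesis using j by simp
      next
        assume q: "q = normalize (?p[i := a - 1] @ [1])"
        have "normalize (?p[i := a - 1] @ [1]) = ?be"
          by (rule normalize_from_mset[OF sortB _ z(2)]) (use i in \<open>simp add: mset_update msetB\<close>, simp add: c)
        then show ?thesis using q by simp
      qed
    next
      assume "unit_transfer q ?p"
      then obtain i where i: "i < length q" and
        h: "(\<exists>j < length q. j \<noteq> i \<and> ?p = normalize (q[i := q ! i - 1, j := q ! j + 1]))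
            \<or> ?p = normalize (q[i := q ! i - 1] @ [1])"
        unfolding unit_transfer_def by blast
      have setp: "set (filter (\<lambda>x. x \<noteq> 0) xs) = set ?p" if "?p = normalize xs" for xs
        using arg_cong[OF mset_normalize[of xs], of set_mset] that by simp
      have qpos: "\<forall>k < length q. q ! k > 0" using pq by (auto simp: is_partition_def)
      from h show ?thesis
      proof
        assume pn: "?p = normalize (q[i := q ! i - 1] @ [1])"
        have "1 \<in> set (filter (\<lambda>x. x \<noteq> 0) (q[i := q ! i - 1] @ [1]))" by simp
        with setp[OF pn] have "1 \<in> set ?p" by blast
        then show ?thesis using assms(2) by simp
      next
        assume "\<exists>j < length q. j \<noteq> i \<and> ?p = normalize (q[i := q ! i - 1, j := q ! j + 1])"
        then obtain j where j: "j < length q" "j \<noteq> i"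
          and pr: "?p = normalize (q[i := q ! i - 1, j := q ! j + 1])" by blast
        define r where "r = q[i := q ! i - 1, j := q ! j + 1]"
        define L where "L = length q"
        define x where "x = q ! i"
        define y where "y = q ! j"
        have ra: "r ! k = a" if "k < L" "r ! k \<noteq> 0" for k
        proof -
          have "r ! k \<in> set (filter (\<lambda>x. x \<noteq> 0) r)" using that by (simp add: r_def L_def)
          then have "r ! k \<in> set ?p" using setp[OF pr[folded r_def]] by blast
          then show ?thesis by simp
        qed
        have ya: "y = a - 1" using ra[of j] j by (simp add: r_def L_def y_def)
        have xa: "x = 1 \<or> x = a + 1"
          using ra[of i] i j qpos[rule_format, OF i] by (simp add: r_def L_def x_def) arith
        have qk: "q ! k = a" if "k < L" "k \<noteq> i" "k \<noteq> j" for k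
          using ra[of k] that qpos by (simp add: r_def L_def)
        have qeq: "q = (replicate L a)[i := x, j := a - 1]"
        proof (rule nth_equalityI)
          show "length q = length ((replicate L a)[i := x, j := a - 1])" by (simp add: L_def)
          fix k assume k: "k < length q"
          show "q ! k = (replicate L a)[i := x, j := a - 1] ! k"
          proof (cases "k = j")
            case True then show ?thesis using k ya by (simp add: L_def y_def)
          next
            case False
            then show ?thesis using k qk[of k] j by (cases "k = i") (simp_all add: L_def x_def)
          qed
        qed
        have mq: "mset q = replicate_mset (L-2) a + {#x, a-1#}"
          using qeq mset_rep2[of i L j a x "a-1"] i j by (simp add: L_def)
        have "sum_list q = a * b" using pq assms by (simp add: is_partition_def)
        then have sq: "(L-2) * a + x + (a - 1) = a * b"
          using sum_mset_sum_list[of q] mq by simp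
        have "L \<ge> 2" using i j unfolding L_def by linarith
        then obtain m where m: "L = Suc (Suc m)" by (metis add_2_eq_Suc le_Suc_ex)
        from xa show ?thesis
        proof
          assume x1: "x = 1"
          have "(m + 1) * a = b * a" using sq x1 m assms(2) by (simp add: algebra_simps)
          then have "m + 1 = b" using assms(2) by (metis mult_right_cancel not_numeral_le_zero le_zero_eq)
          then have "mset q = mset ?be" using mq msetB m x1 by simp
          then show ?thesis using sorted_desc_eq[OF _ sortB] pq by (auto simp: is_partition_def)
        next
          assume x1: "x = a + 1"
          have "(m + 2) * a = b * a" using sq x1 m assms(2) by (simp add: algebra_simps)
          then have "m + 2 = b" using assms(2) by (metis mult_right_cancel not_numeral_le_zero le_zero_eq)
          then have "mset q = mset ?al" using mq msetA m x1 by (simp add: add_mset_commute)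
          then show ?thesis using sorted_desc_eq[OF _ sortA] pq by (auto simp: is_partition_def)
        qed
      qed
    qed
  qed
  show ?thesis
  proof (intro conjI neq)
    show "{q. adjacent n ?p q} = {?al, ?be}"
      using sub partP partA partB utA utB by (auto simp: adjacent_def)
  qed
qed

end
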